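(* Let $k$ be a field and $O=k\langle z_1,z_2\rangle/(z_2^2z_1,\ z_2z_1^3,\ z_2z_1z_2z_1^2)$, graded with $\deg z_1=\deg z_2=1$. Then the Hilbert series of $O$ is $H_O(t)=\frac{1}{(1-t)^2(1-t^2)(1-t^3)}$.
   Context: The Hilbert series of a graded vector space $M=\bigoplus M_i$ is $H_M(t)=\sum_i(\dim_kM_i)t^i$. *)

theory Defs
  imports Main "HOL-Computational_Algebra.Formal_Power_Series" "HOL-Library.Function_Algebras"
begin

text \<open>The free associative algebra k<z1,z2> is modelled as finitely supported
functions from words over the alphabet {z1,z2} to k. A word is a bool list,
with False standing for z1 and True for z2.\<close>

type_synonym word = "bool list"

definition freealg :: "(word \<Rightarrow> 'k::field) set" where
  "freealg = {f. finite {w. f w \<noteq> 0}}"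

definition fmul :: "(word \<Rightarrow> 'k::field) \<Rightarrow> (word \<Rightarrow> 'k) \<Rightarrow> word \<Rightarrow> 'k" where
  "fmul f g w = (\<Sum>i\<le>length w. f (take i w) * g (drop i w))"

definition monom_w :: "word \<Rightarrow> word \<Rightarrow> 'k::field" where
  "monom_w u = (\<lambda>v. if v = u then 1 else 0)"

definition fscale :: "'k::field \<Rightarrow> (word \<Rightarrow> 'k) \<Rightarrow> word \<Rightarrow> 'k" where
  "fscale c f = (\<lambda>w. c * f w)"

inductive_set ideal_gen :: "(word \<Rightarrow> 'k::field) set \<Rightarrow> (word \<Rightarrow> 'k) set" for R where
  zero: "(\<lambda>w. 0) \<in> ideal_gen R"
| add: "x \<in> ideal_gen R \<Longrightarrow> y \<in> ideal_gen R \<Longrightarrow> (\<lambda>w. x w + y w) \<in> ideal_gen R"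
| gen: "a \<in> freealg \<Longrightarrow> b \<in> freealg \<Longrightarrow> r \<in> R \<Longrightarrow> fmul (fmul a r) b \<in> ideal_gen R"

definition homog :: "nat \<Rightarrow> (word \<Rightarrow> 'k::field) set" where
  "homog n = {f \<in> freealg. \<forall>w. f w \<noteq> 0 \<longrightarrow> length w = n}"

text \<open>dim_k of the degree-n component of the quotient A/I, i.e. of the image
of A_n in A/I, which is A_n/(A_n \<inter> I).\<close>
definition quot_dim :: "'k::field itself \<Rightarrow> (word \<Rightarrow> 'k) set \<Rightarrow> nat \<Rightarrow> nat" where
  "quot_dim _ R n =
     vector_space.dim (fscale :: 'k \<Rightarrow> _) (homog n)
     - vector_space.dim (fscale :: 'k \<Rightarrow> _) (homog n \<inter> ideal_gen R)"

definition hilbert_series :: "'k::field itself \<Rightarrow> (word \<Rightarrow> 'k) set \<Rightarrow> rat fps" where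
  "hilbert_series K R = Abs_fps (\<lambda>n. of_nat (quot_dim K R n))"

definition O_rels :: "(word \<Rightarrow> 'k::field) set" where
  "O_rels = {monom_w [True, True, False], monom_w [True, False, False, False],
             monom_w [True, False, True, False, False]}"

end

theory Submission
  imports Defs
begin


lemma vs: "vector_space (fscale :: 'k::field \<Rightarrow> (word \<Rightarrow> 'k) \<Rightarrow> _)"
  by unfold_locales (auto simp: fscale_def plus_fun_def algebra_simps)

lemma vsm: "module (fscale :: 'k::field \<Rightarrow> (word \<Rightarrow> 'k) \<Rightarrow> _)"
  using vs module_iff_vector_space by blast

lemma sum_fun_app: "finite A \<Longrightarrow> (\<Sum>x\<in>A. g x) w = (\<Sum>x\<in>A. g x w)"
  for g :: "'a \<Rightarrow> word \<Rightarrow> 'k::field"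
  by (induction A rule: finite_induct) (auto simp: plus_fun_def)

lemma monom_inj: "monom_w u = (monom_w v :: word \<Rightarrow> 'k::field) \<longleftrightarrow> u = v"
  by (metis monom_w_def zero_neq_one)

lemma expand:
  fixes f :: "word \<Rightarrow> 'k::field"
  assumes "finite S" "\<forall>w. f w \<noteq> 0 \<longrightarrow> w \<in> S"
  shows "f = (\<Sum>w\<in>S. fscale (f w) (monom_w w))"
proof
  fix x
  have "(\<Sum>w\<in>S. fscale (f w) (monom_w w)) x = (\<Sum>w\<in>S. if x = w then f w else 0)"
    by (simp add: sum_fun_app[OF assms(1)] fscale_def monom_w_def if_distrib cong: if_cong)
  also have "\<dots> = f x" using assms by (auto simp: sum.delta)
  finally show "f x = (\<Sum>w\<in>S. fscale (f w) (monom_w w)) x" by simp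
qed

lemma dim_supp:
  assumes "finite S"
  shows "vector_space.dim (fscale :: 'k::field \<Rightarrow> _) {f :: word \<Rightarrow> 'k. \<forall>w. f w \<noteq> 0 \<longrightarrow> w \<in> S} = card S"
proof (rule vector_space.dim_unique[OF vs])
  let ?B = "(monom_w :: word \<Rightarrow> word \<Rightarrow> 'k) ` S"
  show "?B \<subseteq> {f :: word \<Rightarrow> 'k. \<forall>w. f w \<noteq> 0 \<longrightarrow> w \<in> S}"
    by (auto simp: monom_w_def split: if_splits)
  show "{f :: word \<Rightarrow> 'k. \<forall>w. f w \<noteq> 0 \<longrightarrow> w \<in> S} \<subseteq> module.span fscale ?B"
  proof
    fix f :: "word \<Rightarrow> 'k" assume "f \<in> {f. \<forall>w. f w \<noteq> 0 \<longrightarrow> w \<in> S}"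
    then have "f = (\<Sum>w\<in>S. fscale (f w) (monom_w w))" using expand assms by blast
    also have "\<dots> \<in> module.span fscale ?B"
      by (intro module.span_sum[OF vsm] module.span_scale[OF vsm] module.span_base[OF vsm]) auto
    finally show "f \<in> module.span fscale ?B" .
  qed
  show "card ?B = card S" by (rule card_image) (auto simp: inj_on_def monom_inj)
  show "\<not> module.dependent fscale ?B"
    unfolding module.independent_explicit_module[OF vsm]
  proof (intro allI impI)
    fix t c v assume t: "finite t" "t \<subseteq> ?B" and h: "(\<Sum>v\<in>t. fscale (c v) v) = 0" and v: "v \<in> t"
    then obtain u where u: "u \<in> S" "v = monom_w u" by auto
    have "0 = (\<Sum>v\<in>t. fscale (c v) v) u" using h by simp
    also have "\<dots> = (\<Sum>v\<in>t. if v = monom_w u then c v else 0)"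
      using t
      by (intro trans[OF sum_fun_app] sum.cong) (auto simp: fscale_def monom_w_def split: if_splits)
    also have "\<dots> = c v" using u t v by (simp add: sum.delta)
    finally show "c v = 0" by simp
  qed
qed



definition Rw :: "word set" where
  "Rw = {[True, True, False], [True, False, False, False], [True, False, True, False, False]}"

definition badw :: "word \<Rightarrow> bool" where
  "badw w = (\<exists>u r v. r \<in> Rw \<and> w = u @ r @ v)"

lemma O_rels_eq: "O_rels = monom_w ` Rw"
  by (simp add: O_rels_def Rw_def)

lemma tdeq: "i \<le> length w \<Longrightarrow> (take i w = u \<and> drop i w = v) \<longleftrightarrow> (i = length u \<and> w = u @ v)"
proof
  assume "i \<le> length w" "take i w = u \<and> drop i w = v"
  then show "i = length u \<and> w = u @ v" by auto
next
  assume "i = length u \<and> w = u @ v"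
  then show "take i w = u \<and> drop i w = v" by auto
qed

lemma fmul_monom: "fmul (monom_w u) (monom_w v) = (monom_w (u @ v) :: word \<Rightarrow> 'k::field)"
proof
  fix w
  have "fmul (monom_w u) (monom_w v) w = (\<Sum>i\<le>length w. if i = length u \<and> w = u @ v then (1::'k) else 0)"
    unfolding fmul_def monom_w_def
    by (intro sum.cong refl, subst tdeq[symmetric]) auto
  also have "\<dots> = (monom_w (u @ v) w :: 'k)"
    by (auto simp: monom_w_def sum.delta')
  finally show "fmul (monom_w u) (monom_w v) w = (monom_w (u @ v) w :: 'k)" .
qed

lemma fmul_scale: "fmul (fscale c a) b = fscale c (fmul a b)"
  by (auto simp: fmul_def fscale_def sum_distrib_left mult.assoc)

lemma monom_free: "monom_w u \<in> freealg"
  by (auto simp: freealg_def monom_w_def)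

lemma fscale_free: "a \<in> freealg \<Longrightarrow> fscale c a \<in> freealg"
  by (auto simp: freealg_def fscale_def elim: finite_subset[rotated])

lemma ideal_supp:
  assumes "x \<in> ideal_gen (O_rels :: (word \<Rightarrow> 'k::field) set)" "x w \<noteq> 0"
  shows "badw w"
  using assms
proof (induction arbitrary: w)
  case zero then show ?case by simp
next
  case (add x y) then show ?case by (metis add.left_neutral)
next
  case (gen a b r)
  obtain i where i: "fmul a r (take i w) * b (drop i w) \<noteq> 0"
    using gen.prems unfolding fmul_def by (rule sum.not_neutral_contains_not_neutral)
  then have i: "fmul a r (take i w) \<noteq> 0" "b (drop i w) \<noteq> 0" by auto
  obtain j where j: "a (take j (take i w)) * r (drop j (take i w)) \<noteq> 0"
    using i(1) unfolding fmul_def by (rule sum.not_neutral_contains_not_neutral)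
  then have j: "a (take j (take i w)) \<noteq> 0" "r (drop j (take i w)) \<noteq> 0" by auto
  obtain \<rho> where \<rho>: "\<rho> \<in> Rw" "r = monom_w \<rho>" using gen.hyps O_rels_eq by auto
  have "drop j (take i w) = \<rho>" using j(2) \<rho> by (auto simp: monom_w_def split: if_splits)
  then have "w = take j (take i w) @ \<rho> @ drop i w"
    by (metis append_assoc append_take_drop_id)
  then show ?case using \<rho> unfolding badw_def by blast
qed

lemma ideal_sum: "finite A \<Longrightarrow> (\<And>a. a \<in> A \<Longrightarrow> g a \<in> ideal_gen R) \<Longrightarrow> sum g A \<in> ideal_gen R"
proof (induction A rule: finite_induct)
  case empty then show ?case using ideal_gen.zero by (simp add: zero_fun_def)
next
  case (insert a A)
  then have "(\<lambda>w. g a w + sum g A w) \<in> ideal_gen R" by (intro ideal_gen.add) auto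
  then show ?case using insert by (simp add: plus_fun_def)
qed

lemma ideal_monom:
  assumes "badw w"
  shows "fscale c (monom_w w) \<in> ideal_gen (O_rels :: (word \<Rightarrow> 'k::field) set)"
proof -
  obtain u r v where h: "r \<in> Rw" "w = u @ r @ v" using assms badw_def by auto
  have "fmul (fmul (fscale c (monom_w u)) (monom_w r)) (monom_w v) \<in> ideal_gen (O_rels :: (word \<Rightarrow> 'k::field) set)"
    using h by (intro ideal_gen.gen fscale_free monom_free) (auto simp: O_rels_eq)
  then show ?thesis using h by (simp add: fmul_scale fmul_monom)
qed

definition Wn :: "nat \<Rightarrow> word set" where "Wn n = {w. length w = n}"

lemma Wn_finite: "finite (Wn n)"
proof -
  have "Wn n \<subseteq> {xs. set xs \<subseteq> (UNIV::bool set) \<and> length xs = n}" by (auto simp: Wn_def)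
  then show ?thesis using finite_lists_length_eq[of "UNIV::bool set" n] finite_subset by auto
qed

lemma homog_eq: "homog n = {f :: word \<Rightarrow> 'k::field. \<forall>w. f w \<noteq> 0 \<longrightarrow> w \<in> Wn n}"
  using Wn_finite[of n] by (auto simp: homog_def freealg_def Wn_def elim: finite_subset[rotated])

lemma homog_ideal_eq: "homog n \<inter> ideal_gen O_rels = {f :: word \<Rightarrow> 'k::field. \<forall>w. f w \<noteq> 0 \<longrightarrow> w \<in> Wn n \<inter> {w. badw w}}"
proof (intro equalityI subsetI)
  fix f :: "word \<Rightarrow> 'k" assume "f \<in> homog n \<inter> ideal_gen O_rels"
  then show "f \<in> {f :: word \<Rightarrow> 'k::field. \<forall>w. f w \<noteq> 0 \<longrightarrow> w \<in> Wn n \<inter> {w. badw w}}"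
    using ideal_supp homog_eq by blast
next
  fix f :: "word \<Rightarrow> 'k" assume f: "f \<in> {f :: word \<Rightarrow> 'k::field. \<forall>w. f w \<noteq> 0 \<longrightarrow> w \<in> Wn n \<inter> {w. badw w}}"
  then have "f \<in> homog n" using homog_eq by blast
  moreover have "f = (\<Sum>w\<in>Wn n \<inter> {w. badw w}. fscale (f w) (monom_w w))"
    using f Wn_finite by (intro expand) auto
  moreover have "(\<Sum>w\<in>Wn n \<inter> {w. badw w}. fscale (f w) (monom_w w)) \<in> ideal_gen O_rels"
    using Wn_finite by (intro ideal_sum ideal_monom) auto
  ultimately show "f \<in> homog n \<inter> ideal_gen O_rels" by simp
qed

lemma quot_dim_eq: "quot_dim TYPE('k::field) (O_rels :: (word \<Rightarrow> 'k) set) n = card {w. length w = n \<and> \<not> badw w}"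
proof -
  have "quot_dim TYPE('k::field) (O_rels :: (word \<Rightarrow> 'k) set) n = card (Wn n) - card (Wn n \<inter> {w. badw w})"
    unfolding quot_dim_def homog_ideal_eq unfolding homog_eq
    by (subst dim_supp, simp add: Wn_finite)+ simp
  also have "\<dots> = card (Wn n - (Wn n \<inter> {w. badw w}))"
    using Wn_finite by (simp add: card_Diff_subset)
  also have "Wn n - (Wn n \<inter> {w. badw w}) = {w. length w = n \<and> \<not> badw w}" by (auto simp: Wn_def)
  finally show ?thesis .
qed



fun goodw :: "word \<Rightarrow> bool" where
  "goodw [] = True"
| "goodw (x # w) = (goodw w \<and> (\<forall>r\<in>Rw. \<not> (\<exists>v. x # w = r @ v)))"

lemma bad_nil: "\<not> badw []"
  by (auto simp: badw_def Rw_def)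

lemma bad_cons: "badw (x # w) \<longleftrightarrow> (\<exists>r\<in>Rw. \<exists>v. x # w = r @ v) \<or> badw w"
proof
  assume "badw (x # w)"
  then obtain u r v where h: "r \<in> Rw" "x # w = u @ r @ v" by (auto simp: badw_def)
  show "(\<exists>r\<in>Rw. \<exists>v. x # w = r @ v) \<or> badw w"
  proof (cases u)
    case Nil then show ?thesis using h by auto
  next
    case (Cons y u') then show ?thesis using h by (auto simp: badw_def)
  qed
next
  assume "(\<exists>r\<in>Rw. \<exists>v. x # w = r @ v) \<or> badw w"
  then show "badw (x # w)"
  proof
    assume "\<exists>r\<in>Rw. \<exists>v. x # w = r @ v"
    then show ?thesis unfolding badw_def by (metis append_Nil)
  next
    assume "badw w"
    then obtain u r v where "r \<in> Rw" "w = u @ r @ v" by (auto simp: badw_def)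
    then show ?thesis unfolding badw_def by (metis append_Cons)
  qed
qed

lemma bad_good: "badw w \<longleftrightarrow> \<not> goodw w"
  by (induction w) (auto simp: bad_nil bad_cons)

lemma good_F: "goodw (False # w) = goodw w"
  by (simp add: Rw_def)

lemma good_TT: "goodw (True # True # w) \<longleftrightarrow> (\<forall>x\<in>set w. x)"
proof (induction w)
  case Nil then show ?case by (simp add: Rw_def)
next
  case (Cons a w) then show ?case by (cases a) (auto simp: Rw_def)
qed

lemma good_TFF: "goodw (True # False # False # w) \<longleftrightarrow> goodw w \<and> (w = [] \<or> hd w)"
  by (cases w) (auto simp: Rw_def good_F)

lemma good_TF: "goodw (True # False # w) \<longleftrightarrow> goodw w \<and> \<not> (\<exists>v. w = True # False # False # v) \<and> \<not> (\<exists>v. w = False # False # v)"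
  by (auto simp: Rw_def good_F)

lemma good_T: "goodw [True]"
  by (simp add: Rw_def)

declare goodw.simps(2)[simp del]

fun isQ :: "word \<Rightarrow> bool" where
  "isQ (True # False # w) = isQ w"
| "isQ w = (\<forall>x\<in>set w. x)"

fun isP :: "word \<Rightarrow> bool" where
  "isP (True # False # False # w) = isP w"
| "isP w = isQ w"

fun isG :: "word \<Rightarrow> bool" where
  "isG (False # w) = isG w"
| "isG w = isP w"

lemma good_Q: "w = [] \<or> hd w \<Longrightarrow> \<not> (\<exists>v. w = True # False # False # v) \<Longrightarrow> goodw w \<longleftrightarrow> isQ w"
proof (induction w rule: isQ.induct)
  case (1 w)
  show ?case
  proof (cases "\<exists>v. w = True # False # False # v")
    case True then show ?thesis by (auto simp: good_TF)
  next
    case False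
    have "w = [] \<or> hd w" using 1(3) by (cases w) auto
    then show ?thesis using 1 False by (simp add: good_TF)
  qed
qed (simp_all add: good_TT good_T)

lemma good_P: "w = [] \<or> hd w \<Longrightarrow> goodw w \<longleftrightarrow> isP w"
proof (induction w rule: isP.induct)
  case (1 w)
  show ?case
  proof (cases "w = [] \<or> hd w")
    case True then show ?thesis using 1 by (simp add: good_TFF)
  next
    case False
    then obtain v where "w = False # v" by (cases w) auto
    then show ?thesis by (simp add: good_TFF)
  qed
qed (simp_all add: good_Q)

lemma good_G: "goodw w \<longleftrightarrow> isG w"
proof (induction w rule: isG.induct)
  case (1 w)
  then show ?case by (simp add: good_F)
qed (simp_all add: good_P)



definition Qs :: "nat \<Rightarrow> word set" where "Qs n = {w. length w = n \<and> isQ w}"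
definition Ps :: "nat \<Rightarrow> word set" where "Ps n = {w. length w = n \<and> isP w}"
definition Gs :: "nat \<Rightarrow> word set" where "Gs n = {w. length w = n \<and> isG w}"
definition Rs :: "nat \<Rightarrow> word set" where "Rs n = {w. length w = n \<and> (\<forall>x\<in>set w. x)}"

lemma fin_len: "finite {w :: word. length w = n \<and> P w}"
  using Wn_finite[of n] by (rule finite_subset[rotated]) (auto simp: Wn_def)

lemma Rs_eq: "Rs n = {replicate n True}"
  by (auto simp: Rs_def replicate_length_same)

lemma isQ_unf: "isQ w \<longleftrightarrow> (\<exists>v. w = True # False # v \<and> isQ v) \<or> (\<not> (\<exists>v. w = True # False # v) \<and> (\<forall>x\<in>set w. x))"
  by (cases w rule: isQ.cases) auto

lemma isP_unf: "isP w \<longleftrightarrow> (\<exists>v. w = True # False # False # v \<and> isP v) \<or> (\<not> (\<exists>v. w = True # False # False # v) \<and> isQ w)"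
  by (cases w rule: isP.cases) auto

lemma isG_unf: "isG w \<longleftrightarrow> (\<exists>v. w = False # v \<and> isG v) \<or> (\<not> (\<exists>v. w = False # v) \<and> isP w)"
  by (cases w rule: isG.cases) auto

lemma Qs_rec: "Qs (Suc (Suc n)) = (\<lambda>w. True # False # w) ` Qs n \<union> Rs (Suc (Suc n))"
proof (intro equalityI subsetI)
  fix w assume "w \<in> Qs (Suc (Suc n))"
  then have w: "length w = Suc (Suc n)" "isQ w" by (auto simp: Qs_def)
  show "w \<in> (\<lambda>w. True # False # w) ` Qs n \<union> Rs (Suc (Suc n))"
  proof (cases "\<exists>v. w = True # False # v")
    case True then show ?thesis using w by (auto simp: Qs_def)
  next
    case False then show ?thesis using w isQ_unf[of w] by (auto simp: Rs_def)
  qed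
next
  fix w assume "w \<in> (\<lambda>w. True # False # w) ` Qs n \<union> Rs (Suc (Suc n))"
  then show "w \<in> Qs (Suc (Suc n))"
  proof
    assume "w \<in> Rs (Suc (Suc n))"
    then show ?thesis using isQ_unf[of w] by (auto simp: Rs_def Qs_def)
  qed (auto simp: Qs_def)
qed

lemma Ps_rec: "Ps (Suc (Suc (Suc n))) = (\<lambda>w. True # False # False # w) ` Ps n \<union> Qs (Suc (Suc (Suc n)))"
proof (intro equalityI subsetI)
  fix w assume "w \<in> Ps (Suc (Suc (Suc n)))"
  then have w: "length w = Suc (Suc (Suc n))" "isP w" by (auto simp: Ps_def)
  show "w \<in> (\<lambda>w. True # False # False # w) ` Ps n \<union> Qs (Suc (Suc (Suc n)))"
  proof (cases "\<exists>v. w = True # False # False # v")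
    case True then show ?thesis using w by (auto simp: Ps_def)
  next
    case False then show ?thesis using w isP_unf[of w] by (auto simp: Qs_def)
  qed
next
  fix w assume "w \<in> (\<lambda>w. True # False # False # w) ` Ps n \<union> Qs (Suc (Suc (Suc n)))"
  then show "w \<in> Ps (Suc (Suc (Suc n)))"
  proof
    assume "w \<in> Qs (Suc (Suc (Suc n)))"
    then show ?thesis using isP_unf[of w] by (auto simp: Ps_def Qs_def)
  qed (auto simp: Ps_def)
qed

lemma isP_small: "length w < 3 \<Longrightarrow> isP w = isQ w"
  by (cases w rule: isP.cases) auto

lemma Ps_small: "n < 3 \<Longrightarrow> Ps n = Qs n"
  using isP_small by (auto simp: Ps_def Qs_def)

lemma Gs_rec: "Gs (Suc n) = (\<lambda>w. False # w) ` Gs n \<union> Ps (Suc n)"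
proof (intro equalityI subsetI)
  fix w assume "w \<in> Gs (Suc n)"
  then have w: "length w = Suc n" "isG w" by (auto simp: Gs_def)
  show "w \<in> (\<lambda>w. False # w) ` Gs n \<union> Ps (Suc n)"
  proof (cases "\<exists>v. w = False # v")
    case True then show ?thesis using w by (auto simp: Gs_def)
  next
    case False then show ?thesis using w isG_unf[of w] by (auto simp: Ps_def)
  qed
next
  fix w assume "w \<in> (\<lambda>w. False # w) ` Gs n \<union> Ps (Suc n)"
  then show "w \<in> Gs (Suc n)"
  proof
    assume "w \<in> Ps (Suc n)"
    then show ?thesis using isG_unf[of w] by (auto simp: Ps_def Gs_def)
  qed (auto simp: Gs_def)
qed

lemma Gs0: "Gs 0 = Ps 0"
  by (auto simp: Gs_def Ps_def)

lemma Qs0: "Qs 0 = {[]}"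
  by (auto simp: Qs_def)

lemma Qs1: "Qs (Suc 0) = {[True]}"
  by (auto simp: Qs_def length_Suc_conv)

lemma cQ: "card (Qs (Suc (Suc n))) = card (Qs n) + 1"
proof -
  have "card (Qs (Suc (Suc n))) = card ((\<lambda>w. True # False # w) ` Qs n) + card (Rs (Suc (Suc n)))"
    unfolding Qs_rec
    by (rule card_Un_disjoint) (auto simp: Qs_def Rs_def fin_len)
  also have "card ((\<lambda>w. True # False # w) ` Qs n) = card (Qs n)"
    by (rule card_image) (auto simp: inj_on_def)
  finally show ?thesis by (simp add: Rs_eq)
qed

lemma cP: "card (Ps (Suc (Suc (Suc n)))) = card (Ps n) + card (Qs (Suc (Suc (Suc n))))"
proof -
  have "card (Ps (Suc (Suc (Suc n)))) = card ((\<lambda>w. True # False # False # w) ` Ps n) + card (Qs (Suc (Suc (Suc n))))"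
    unfolding Ps_rec
    by (rule card_Un_disjoint) (auto simp: Qs_def Ps_def fin_len)
  also have "card ((\<lambda>w. True # False # False # w) ` Ps n) = card (Ps n)"
    by (rule card_image) (auto simp: inj_on_def)
  finally show ?thesis .
qed

lemma cG: "card (Gs (Suc n)) = card (Gs n) + card (Ps (Suc n))"
proof -
  have "card (Gs (Suc n)) = card ((\<lambda>w. False # w) ` Gs n) + card (Ps (Suc n))"
    unfolding Gs_rec
    by (rule card_Un_disjoint) (auto simp: Gs_def Ps_def fin_len)
  also have "card ((\<lambda>w. False # w) ` Gs n) = card (Gs n)"
    by (rule card_image) (auto simp: inj_on_def)
  finally show ?thesis .
qed



definition "Gf = Abs_fps (\<lambda>n. of_nat (card (Gs n)) :: rat)"
definition "Pf = Abs_fps (\<lambda>n. of_nat (card (Ps n)) :: rat)"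
definition "Qf = Abs_fps (\<lambda>n. of_nat (card (Qs n)) :: rat)"
definition "Rf = Abs_fps (\<lambda>n. 1 :: rat)"

lemma mulk: "fps_nth (f * (1 - fps_X ^ k)) n = fps_nth f n - (if n < k then 0 else fps_nth f (n - k))"
  for f :: "rat fps"
  by (simp add: right_diff_distrib fps_X_power_mult_right_nth)

lemma s1: "Gf * (1 - fps_X ^ 1) = Pf"
proof (rule fps_ext)
  fix n show "fps_nth (Gf * (1 - fps_X ^ 1)) n = fps_nth Pf n"
    unfolding mulk by (cases n) (simp_all add: Gf_def Pf_def Gs0 cG)
qed

lemma s2: "Pf * (1 - fps_X ^ 3) = Qf"
proof (rule fps_ext)
  fix n show "fps_nth (Pf * (1 - fps_X ^ 3)) n = fps_nth Qf n"
  proof (cases "n < 3")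
    case True then show ?thesis unfolding mulk by (simp add: Pf_def Qf_def Ps_small)
  next
    case False
    then have "n = Suc (Suc (Suc (n - 3)))" by simp
    then have "card (Ps n) = card (Ps (n - 3)) + card (Qs n)" by (metis cP)
    then show ?thesis using False unfolding mulk by (simp add: Pf_def Qf_def)
  qed
qed

lemma s3: "Qf * (1 - fps_X ^ 2) = Rf"
proof (rule fps_ext)
  fix n show "fps_nth (Qf * (1 - fps_X ^ 2)) n = fps_nth Rf n"
  proof (cases n)
    case 0 then show ?thesis unfolding mulk by (simp add: Qf_def Rf_def Qs0)
  next
    case (Suc m) then show ?thesis
      by (cases m) (simp_all add: mulk Qf_def Rf_def Qs1 cQ)
  qed
qed

lemma s4: "Rf * (1 - fps_X ^ 1) = 1"
proof (rule fps_ext)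
  fix n show "fps_nth (Rf * (1 - fps_X ^ 1)) n = fps_nth (1 :: rat fps) n"
    unfolding mulk by (cases n) (simp_all add: Rf_def)
qed

lemma Gf_inv: "inverse ((1 - fps_X)^2 * (1 - fps_X^2) * (1 - fps_X^3)) = Gf"
proof (rule fps_inverse_unique)
  have "(1 - fps_X)^2 * (1 - fps_X^2) * (1 - fps_X^3) * Gf
      = (((Gf * (1 - fps_X ^ 1)) * (1 - fps_X ^ 3)) * (1 - fps_X ^ 2)) * (1 - fps_X ^ 1)"
    by (simp add: power2_eq_square mult_ac)
  also have "\<dots> = 1" by (simp only: s1 s2 s3 s4)
  finally show "(1 - fps_X)^2 * (1 - fps_X^2) * (1 - fps_X^3) * Gf = 1" .
qed


theorem lemma7p3:
  shows "hilbert_series TYPE('k::field) (O_rels :: (word \<Rightarrow> 'k) set) =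
    inverse ((1 - fps_X)^2 * (1 - fps_X^2) * (1 - fps_X^3))"
proof -
  have "\<And>n. {w. length w = n \<and> \<not> badw w} = Gs n"
    by (auto simp: Gs_def bad_good good_G)
  then have "hilbert_series TYPE('k::field) (O_rels :: (word \<Rightarrow> 'k) set) = Gf"
    by (simp add: hilbert_series_def Gf_def quot_dim_eq)
  then show ?thesis by (simp add: Gf_inv)
qed

end
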